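(* Let $S$ and $S'$ be two TBLS searches with strict partial orders $\prec_S$ and $\prec_{S'}$ on $P_f(\mathbb{N}^+)$. Then the following are equivalent: (i) for every finite graph $G$, every $S'$-ordering of $G$ is also an $S$-ordering of $G$; (ii) for all $A,B\in P_f(\mathbb{N}^+)$, $A\prec_S B$ implies $A\prec_{S'} B$.
   Context: Let $G=(V,E)$ be a finite undirected graph with $n$ vertices; $N(v)$ denotes the set of neighbours of $v$. An ordering of $V$ is a bijection $\sigma:\{1,\dots,n\}\to V$; $\sigma(i)$ is the $i$th vertex. $P_f(\mathbb{N}^+)$ is the set of finite subsets of the positive integers. Given a strict partial order $\prec$ on $P_f(\mathbb{N}^+)$ and an ordering $\tau$ of $V$, the Tie-Breaking Label Search $\mathrm{TBLS}(G,\prec,\tau)$ is the procedure: set $label(v)=\emptyset$ for every $v$; for $i=1,\dots,n$: let Eligible be the set of unnumbered vertices $x$ such that there is no unnumbered vertex $y$ with $label(x)\prec label(y)$; let $v$ be the first vertex of Eligible in the ordering $\tau$; set $\sigma(i)=v$ ($v$ becomes numbered); for every unnumbered neighbour $w$ of $v$ replace $label(w)$ by $label(w)\cup\{i\}$. The output is $\sigma$. A TBLS search $S$ is specified by a strict partial order $\prec_S$ on $P_f(\mathbb{N}^+)$; an ordering $\sigma$ of $V$ is an $S$-ordering of $G$ if $\sigma=\mathrm{TBLS}(G,\prec_S,\tau)$ for some ordering $\tau$ of $V$. *)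

theory Defs
  imports Main
begin

definition PF :: "nat set set" where
  "PF = {A. finite A \<and> 0 \<notin> A}"

definition strict_po_on_PF :: "(nat set \<Rightarrow> nat set \<Rightarrow> bool) \<Rightarrow> bool" where
  "strict_po_on_PF r \<longleftrightarrow>
     (\<forall>A B. r A B \<longrightarrow> A \<in> PF \<and> B \<in> PF) \<and>
     (\<forall>A\<in>PF. \<not> r A A) \<and>
     (\<forall>A\<in>PF. \<forall>B\<in>PF. \<forall>C\<in>PF. r A B \<longrightarrow> r B C \<longrightarrow> r A C)"

definition fin_graph :: "'v set \<Rightarrow> ('v \<Rightarrow> 'v \<Rightarrow> bool) \<Rightarrow> bool" where
  "fin_graph V E \<longleftrightarrow> finite V \<and>
     (\<forall>x y. E x y \<longrightarrow> x \<in> V \<and> y \<in> V \<and> x \<noteq> y \<and> E y x)"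

text \<open>An ordering of V is a list of its vertices without repetition; the i-th vertex
  (1-based) is the list element at index i-1.\<close>
definition is_ordering :: "'v set \<Rightarrow> 'v list \<Rightarrow> bool" where
  "is_ordering V \<sigma> \<longleftrightarrow> distinct \<sigma> \<and> set \<sigma> = V"

definition tbls_label :: "('v \<Rightarrow> 'v \<Rightarrow> bool) \<Rightarrow> 'v list \<Rightarrow> 'v \<Rightarrow> nat set" where
  "tbls_label E p w = {i. 1 \<le> i \<and> i \<le> length p \<and> E (p ! (i - 1)) w}"

definition tbls_eligible ::
  "'v set \<Rightarrow> ('v \<Rightarrow> 'v \<Rightarrow> bool) \<Rightarrow> (nat set \<Rightarrow> nat set \<Rightarrow> bool) \<Rightarrow> 'v list \<Rightarrow> 'v set" where
  "tbls_eligible V E prec p =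
     {x \<in> V - set p. \<not> (\<exists>y \<in> V - set p. prec (tbls_label E p x) (tbls_label E p y))}"

definition tbls_step ::
  "'v set \<Rightarrow> ('v \<Rightarrow> 'v \<Rightarrow> bool) \<Rightarrow> (nat set \<Rightarrow> nat set \<Rightarrow> bool) \<Rightarrow> 'v list \<Rightarrow> 'v list \<Rightarrow> 'v list" where
  "tbls_step V E prec \<tau> p = p @ [hd (filter (\<lambda>x. x \<in> tbls_eligible V E prec p) \<tau>)]"

definition TBLS ::
  "'v set \<Rightarrow> ('v \<Rightarrow> 'v \<Rightarrow> bool) \<Rightarrow> (nat set \<Rightarrow> nat set \<Rightarrow> bool) \<Rightarrow> 'v list \<Rightarrow> 'v list" where
  "TBLS V E prec \<tau> = (tbls_step V E prec \<tau> ^^ card V) []"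

definition is_search_ordering ::
  "'v set \<Rightarrow> ('v \<Rightarrow> 'v \<Rightarrow> bool) \<Rightarrow> (nat set \<Rightarrow> nat set \<Rightarrow> bool) \<Rightarrow> 'v list \<Rightarrow> bool" where
  "is_search_ordering V E prec \<sigma> \<longleftrightarrow> (\<exists>\<tau>. is_ordering V \<tau> \<and> \<sigma> = TBLS V E prec \<tau>)"

end

theory Submission
  imports Defs
begin

lemma label_sub: "tbls_label E p w \<subseteq> {1..length p}"
  unfolding tbls_label_def by auto

lemma label_PF: "tbls_label E p w \<in> PF"
proof -
  have "finite (tbls_label E p w)"
    using finite_subset[OF label_sub finite_atLeastAtMost] .
  moreover have "0 \<notin> tbls_label E p w" unfolding tbls_label_def by simp
  ultimately show ?thesis unfolding PF_def by simp
qed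

lemma max_ex:
  assumes "finite X" "X \<noteq> {}" "\<forall>x\<in>X. \<not> r x x"
    "\<forall>x\<in>X. \<forall>y\<in>X. \<forall>z\<in>X. r x y \<longrightarrow> r y z \<longrightarrow> r x z"
  shows "\<exists>x\<in>X. \<forall>y\<in>X. \<not> r x y"
  using assms
proof (induction X rule: finite_ne_induct)
  case (singleton x)
  have "\<not> r x x" using singleton.prems(1) by blast
  then show ?case by blast
next
  case (insert a X)
  have p1: "\<forall>x\<in>X. \<not> r x x" using insert.prems(1) by blast
  have p2: "\<forall>x\<in>X. \<forall>y\<in>X. \<forall>z\<in>X. r x y \<longrightarrow> r y z \<longrightarrow> r x z"
  proof (intro ballI impI)
    fix x y z assume "x \<in> X" "y \<in> X" "z \<in> X" "r x y" "r y z"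
    then show "r x z" using insert.prems(2) by blast
  qed
  obtain x where x: "x \<in> X" "\<forall>y\<in>X. \<not> r x y" using insert.IH[OF p1 p2] by blast
  show ?case
  proof (cases "r x a")
    case True
    have "\<not> r a y" if y: "y \<in> insert a X" for y
    proof
      assume ay: "r a y"
      show False
      proof (cases "y = a")
        case True
        then show False using ay insert.prems(1) by blast
      next
        case False
        then have yX: "y \<in> X" using y by blast
        have "r x y" using insert.prems(2) \<open>r x a\<close> ay x(1) yX by blast
        then show False using x(2) yX by blast
      qed
    qed
    then show ?thesis by blast
  next
    case False
    then have "\<forall>y\<in>insert a X. \<not> r x y" using x(2) by blast
    then show ?thesis using x(1) by blast
  qed
qed

lemma elig_ne:
  assumes "strict_po_on_PF prec" "finite V" "V - set p \<noteq> {}"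
  shows "tbls_eligible V E prec p \<noteq> {}"
proof -
  have irr: "\<forall>A\<in>PF. \<not> prec A A" and tr: "\<forall>A\<in>PF. \<forall>B\<in>PF. \<forall>C\<in>PF. prec A B \<longrightarrow> prec B C \<longrightarrow> prec A C"
    using assms(1) unfolding strict_po_on_PF_def by blast+
  let ?X = "V - set p" and ?r = "\<lambda>x y. prec (tbls_label E p x) (tbls_label E p y)"
  have f: "finite ?X" using finite_Diff[OF assms(2)] .
  have i: "\<forall>x\<in>?X. \<not> prec (tbls_label E p x) (tbls_label E p x)"
  proof
    fix x
    have "tbls_label E p x \<in> PF" by (rule label_PF)
    then show "\<not> prec (tbls_label E p x) (tbls_label E p x)" by (rule bspec[OF irr])
  qed
  have t: "\<forall>x\<in>?X. \<forall>y\<in>?X. \<forall>z\<in>?X. prec (tbls_label E p x) (tbls_label E p y) \<longrightarrow>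
      prec (tbls_label E p y) (tbls_label E p z) \<longrightarrow> prec (tbls_label E p x) (tbls_label E p z)"
  proof (intro ballI)
    fix x y z
    show "prec (tbls_label E p x) (tbls_label E p y) \<longrightarrow>
      prec (tbls_label E p y) (tbls_label E p z) \<longrightarrow> prec (tbls_label E p x) (tbls_label E p z)"
      by (rule bspec[OF bspec[OF bspec[OF tr label_PF] label_PF] label_PF])
  qed
  obtain x where "x \<in> ?X" "\<forall>y\<in>?X. \<not> ?r x y" using max_ex[of ?X "\<lambda>x y. prec (tbls_label E p x) (tbls_label E p y)", OF f assms(3) i t] by blast
  then have "x \<in> tbls_eligible V E prec p" unfolding tbls_eligible_def by blast
  then show ?thesis by blast
qed

lemma run:
  assumes spo: "strict_po_on_PF prec" and fin: "finite V" and ord: "is_ordering V \<tau>"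
  shows "k \<le> card V \<Longrightarrow> distinct ((tbls_step V E prec \<tau> ^^ k) []) \<and> set ((tbls_step V E prec \<tau> ^^ k) []) \<subseteq> V
     \<and> length ((tbls_step V E prec \<tau> ^^ k) []) = k
     \<and> (\<forall>j<k. take j ((tbls_step V E prec \<tau> ^^ k) []) = (tbls_step V E prec \<tau> ^^ j) []
            \<and> ((tbls_step V E prec \<tau> ^^ k) []) ! j \<in> tbls_eligible V E prec ((tbls_step V E prec \<tau> ^^ j) []))"
proof (induction k)
  case 0
  then show ?case by simp
next
  case (Suc k)
  define p where "p = (tbls_step V E prec \<tau> ^^ k) []"
  have IH: "distinct p" "set p \<subseteq> V" "length p = k"
     "\<forall>j<k. take j p = (tbls_step V E prec \<tau> ^^ j) []
            \<and> p ! j \<in> tbls_eligible V E prec ((tbls_step V E prec \<tau> ^^ j) [])"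
    using Suc unfolding p_def by auto
  have "card (set p) = k" using distinct_card[OF IH(1)] IH(3) by simp
  have "V - set p \<noteq> {}"
  proof
    assume "V - set p = {}"
    then have "V \<subseteq> set p" by auto
    then have "card V \<le> card (set p)" by (simp add: card_mono)
    then show False using Suc.prems \<open>card (set p) = k\<close> by simp
  qed
  then have "tbls_eligible V E prec p \<noteq> {}" using elig_ne spo fin by blast
  then obtain x where x: "x \<in> tbls_eligible V E prec p" by auto
  have "x \<in> set \<tau>" using x ord unfolding is_ordering_def tbls_eligible_def by auto
  then have ne: "filter (\<lambda>x. x \<in> tbls_eligible V E prec p) \<tau> \<noteq> []"
    using x by (auto simp: filter_empty_conv)
  define v where "v = hd (filter (\<lambda>x. x \<in> tbls_eligible V E prec p) \<tau>)"
  have v: "v \<in> tbls_eligible V E prec p"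
    using hd_in_set[OF ne] unfolding v_def by auto
  then have vV: "v \<in> V" "v \<notin> set p" unfolding tbls_eligible_def by auto
  have eq: "(tbls_step V E prec \<tau> ^^ Suc k) [] = p @ [v]"
    unfolding p_def v_def by (simp add: tbls_step_def)
  have "\<forall>j<Suc k. take j (p @ [v]) = (tbls_step V E prec \<tau> ^^ j) []
            \<and> (p @ [v]) ! j \<in> tbls_eligible V E prec ((tbls_step V E prec \<tau> ^^ j) [])"
  proof (intro allI impI)
    fix j assume j: "j < Suc k"
    show "take j (p @ [v]) = (tbls_step V E prec \<tau> ^^ j) []
            \<and> (p @ [v]) ! j \<in> tbls_eligible V E prec ((tbls_step V E prec \<tau> ^^ j) [])"
    proof (cases "j < k")
      case True
      then have "take j (p @ [v]) = take j p" "(p @ [v]) ! j = p ! j"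
        using IH(3) by (simp_all add: nth_append)
      then show ?thesis using IH(4) True by simp
    next
      case False
      then have "j = k" using j by auto
      have "take k (p @ [v]) = p" "(p @ [v]) ! k = v" using IH(3) by (simp_all add: nth_append)
      then show ?thesis using \<open>j = k\<close> v unfolding p_def by simp
    qed
  qed
  moreover have "distinct (p @ [v])" using IH(1) vV by simp
  moreover have "set (p @ [v]) \<subseteq> V" using IH(2) vV by simp
  moreover have "length (p @ [v]) = Suc k" using IH(3) by simp
  ultimately show ?case unfolding eq by blast
qed

lemma run2:
  assumes spo: "strict_po_on_PF prec" and fin: "finite V" and ord: "is_ordering V \<tau>"
    and s: "\<sigma> = TBLS V E prec \<tau>"
  shows "is_ordering V \<sigma> \<and> (\<forall>j<card V. \<sigma> ! j \<in> tbls_eligible V E prec (take j \<sigma>))"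
proof -
  have R: "distinct \<sigma>" "set \<sigma> \<subseteq> V" "length \<sigma> = card V"
     "\<forall>j<card V. take j \<sigma> = (tbls_step V E prec \<tau> ^^ j) []
            \<and> \<sigma> ! j \<in> tbls_eligible V E prec ((tbls_step V E prec \<tau> ^^ j) [])"
  proof -
    have se: "(tbls_step V E prec \<tau> ^^ card V) [] = \<sigma>" using s unfolding TBLS_def by simp
    show "distinct \<sigma>" "set \<sigma> \<subseteq> V" "length \<sigma> = card V"
     "\<forall>j<card V. take j \<sigma> = (tbls_step V E prec \<tau> ^^ j) []
            \<and> \<sigma> ! j \<in> tbls_eligible V E prec ((tbls_step V E prec \<tau> ^^ j) [])"
      using run[OF spo fin ord, of "card V" E] unfolding se by simp_all
  qed
  have "card (set \<sigma>) = card V" using distinct_card[OF R(1)] R(3) by simp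
  then have "set \<sigma> = V" using R(2) fin card_subset_eq by blast
  then have o: "is_ordering V \<sigma>" using R(1) unfolding is_ordering_def by simp
  have "\<forall>j<card V. \<sigma> ! j \<in> tbls_eligible V E prec (take j \<sigma>)"
  proof (intro allI impI)
    fix j assume "j < card V"
    then have "take j \<sigma> = (tbls_step V E prec \<tau> ^^ j) []"
      "\<sigma> ! j \<in> tbls_eligible V E prec ((tbls_step V E prec \<tau> ^^ j) [])" using R(4) by blast+
    then show "\<sigma> ! j \<in> tbls_eligible V E prec (take j \<sigma>)" by simp
  qed
  then show ?thesis using o by blast
qed

lemma conv:
  assumes ord: "is_ordering V \<sigma>"
    and el: "\<forall>j<card V. \<sigma> ! j \<in> tbls_eligible V E prec (take j \<sigma>)"
  shows "TBLS V E prec \<sigma> = \<sigma>"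
proof -
  have len: "length \<sigma> = card V" using ord distinct_card[of \<sigma>] unfolding is_ordering_def by simp
  have key: "k \<le> card V \<Longrightarrow> (tbls_step V E prec \<sigma> ^^ k) [] = take k \<sigma>" for k
  proof (induction k)
    case 0
    then show ?case by simp
  next
    case (Suc k)
    let ?P = "\<lambda>x. x \<in> tbls_eligible V E prec (take k \<sigma>)"
    have k: "k < length \<sigma>" using Suc.prems len by simp
    have f1: "filter ?P (take k \<sigma>) = []"
      unfolding tbls_eligible_def by (auto simp: filter_empty_conv)
    have d: "drop k \<sigma> = \<sigma> ! k # drop (Suc k) \<sigma>" using k by (simp add: Cons_nth_drop_Suc)
    have Pk: "?P (\<sigma> ! k)" using el Suc.prems by auto
    have "filter ?P \<sigma> = filter ?P (take k \<sigma> @ drop k \<sigma>)" by simp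
    also have "\<dots> = filter ?P (take k \<sigma>) @ filter ?P (drop k \<sigma>)" by (rule filter_append)
    finally have fs: "filter ?P \<sigma> = filter ?P (take k \<sigma>) @ filter ?P (drop k \<sigma>)" .
    have h: "hd (filter ?P \<sigma>) = \<sigma> ! k" unfolding fs f1 d using Pk by simp
    have "(tbls_step V E prec \<sigma> ^^ Suc k) [] = tbls_step V E prec \<sigma> (take k \<sigma>)"
      using Suc by simp
    also have "\<dots> = take k \<sigma> @ [\<sigma> ! k]" unfolding tbls_step_def using h by simp
    also have "\<dots> = take (Suc k) \<sigma>" using k by (simp add: take_Suc_conv_app_nth)
    finally show ?case .
  qed
  have "(tbls_step V E prec \<sigma> ^^ card V) [] = take (card V) \<sigma>" by (rule key) simp
  also have "\<dots> = \<sigma>" using len by simp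
  finally show ?thesis unfolding TBLS_def .
qed


declare upt_Suc[simp del]

lemma construct:
  assumes spo: "strict_po_on_PF precS" and spo': "strict_po_on_PF precS'"
    and AB: "A \<in> PF" "B \<in> PF" "precS A B" "\<not> precS' A B"
    and I: "\<forall>(V :: nat set) E \<sigma>. fin_graph V E \<longrightarrow>
            is_search_ordering V E precS' \<sigma> \<longrightarrow> is_search_ordering V E precS \<sigma>"
  shows False
proof -
  note sp = spo'[unfolded strict_po_on_PF_def]
  have irr': "\<forall>A\<in>PF. \<not> precS' A A" using conjunct1[OF conjunct2[OF sp]] .
  have tr': "\<forall>A\<in>PF. \<forall>B\<in>PF. \<forall>C\<in>PF. precS' A B \<longrightarrow> precS' B C \<longrightarrow> precS' A C"
    using conjunct2[OF conjunct2[OF sp]] .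
  define m where "m = Max (insert 0 (A \<union> B))"
  have finAB: "finite (A \<union> B)" using AB unfolding PF_def by auto
  have le: "x \<le> m" if "x \<in> A \<union> B" for x
    unfolding m_def using finAB that by (intro Max_ge) auto
  have nz: "0 \<notin> A" "0 \<notin> B" using AB unfolding PF_def by auto
  have Am: "A \<subseteq> {1..m}"
  proof
    fix x assume "x \<in> A" then show "x \<in> {1..m}" using le[of x] nz by (cases x) auto
  qed
  have Bm: "B \<subseteq> {1..m}"
  proof
    fix x assume "x \<in> B" then show "x \<in> {1..m}" using le[of x] nz by (cases x) auto
  qed
  have PowPF: "Pow {1..j} \<subseteq> PF" for j :: nat
  proof
    fix X assume "X \<in> Pow {1..j}"
    then have "X \<subseteq> {1..j}" by simp
    then have "finite X" "0 \<notin> X" by (rule finite_subset) (use \<open>X \<subseteq> {1..j}\<close> in auto)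
    then show "X \<in> PF" unfolding PF_def by simp
  qed
  have Mex: "\<exists>M\<in>Pow {1..j}. \<forall>N\<in>Pow {1..j}. \<not> precS' M N" for j :: nat
  proof (rule max_ex)
    show "finite (Pow {1..j})" by simp
    show "Pow {1..j} \<noteq> {}" using Pow_bottom[of "{1..j}"] by (metis empty_iff)
    show "\<forall>x\<in>Pow {1..j}. \<not> precS' x x"
    proof
      fix x assume "x \<in> Pow {1..j}"
      then have "x \<in> PF" using PowPF[of j] by (rule rev_subsetD)
      then show "\<not> precS' x x" by (rule bspec[OF irr'])
    qed
    show "\<forall>x\<in>Pow {1..j}. \<forall>y\<in>Pow {1..j}. \<forall>z\<in>Pow {1..j}. precS' x y \<longrightarrow> precS' y z \<longrightarrow> precS' x z"
    proof (intro ballI)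
      fix x y z assume hx: "x \<in> Pow {1..j}" and hy: "y \<in> Pow {1..j}" and hz: "z \<in> Pow {1..j}"
      have "x \<in> PF" using hx by (rule rev_subsetD[OF _ PowPF[of j]])
      moreover have "y \<in> PF" using hy by (rule rev_subsetD[OF _ PowPF[of j]])
      moreover have "z \<in> PF" using hz by (rule rev_subsetD[OF _ PowPF[of j]])
      ultimately show "precS' x y \<longrightarrow> precS' y z \<longrightarrow> precS' x z"
        by (rule bspec[OF bspec[OF bspec[OF tr']]])
    qed
  qed
  define M where "M j = (SOME M. M \<in> Pow {1..j} \<and> (\<forall>N\<in>Pow {1..j}. \<not> precS' M N))" for j :: nat
  have Msome: "M j \<in> Pow {1..j} \<and> (\<forall>N\<in>Pow {1..j}. \<not> precS' (M j) N)" for j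
    unfolding M_def by (rule someI_ex[OF Mex[of j, unfolded Bex_def]])
  have M: "M j \<subseteq> {1..j}" "\<forall>N\<in>Pow {1..j}. \<not> precS' (M j) N" for j
    using Msome[of j] by simp_all
  define E2 where "E2 u v = (if v < m then u+1 \<in> M v else if v = m then u+1 \<in> A else u+1 \<in> B)"
    for u v :: nat
  define E where "E u v = (u < m+2 \<and> v < m+2 \<and> (u < v \<and> E2 u v \<or> v < u \<and> E2 v u))"
    for u v :: nat
  define V where "V = {0..<m+2}"
  define \<sigma> where "\<sigma> = [0..<m+2]"
  have cV: "card V = m+2" unfolding V_def by simp
  have fg: "fin_graph V E" unfolding fin_graph_def V_def E_def by auto
  have ordS: "is_ordering V \<sigma>" unfolding is_ordering_def V_def \<sigma>_def
    by (rule conjI[OF distinct_upt set_upt])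
  have tk: "take j \<sigma> = [0..<j]" if "j \<le> m+2" for j
  proof -
    have h: "0 + j \<le> m+2" using that by simp
    show ?thesis unfolding \<sigma>_def take_upt[OF h] by simp
  qed
  have lab: "tbls_label E (take j \<sigma>) w = {i. 1 \<le> i \<and> i \<le> j \<and> E2 (i-1) w}"
    if "j \<le> m+2" "j \<le> w" "w < m+2" for j w
    unfolding tbls_label_def tk[OF that(1)] E_def using that by auto
  have labj: "tbls_label E (take j \<sigma>) j = M j" if "j < m" for j
  proof -
    have "tbls_label E (take j \<sigma>) j = {i. 1 \<le> i \<and> i \<le> j \<and> E2 (i-1) j}"
      using lab[of j j] that by simp
    also have "\<dots> = {i. 1 \<le> i \<and> i \<le> j \<and> i \<in> M j}" unfolding E2_def using that by auto
    also have "\<dots> = M j" using M(1)[of j] by auto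
    finally show ?thesis .
  qed
  have labA: "tbls_label E (take m \<sigma>) m = A"
  proof -
    have "tbls_label E (take m \<sigma>) m = {i. 1 \<le> i \<and> i \<le> m \<and> E2 (i-1) m}"
      using lab[of m m] by simp
    also have "\<dots> = {i. 1 \<le> i \<and> i \<le> m \<and> i \<in> A}" unfolding E2_def by auto
    also have "\<dots> = A" using Am by auto
    finally show ?thesis .
  qed
  have labB: "tbls_label E (take m \<sigma>) (m+1) = B"
  proof -
    have "tbls_label E (take m \<sigma>) (m+1) = {i. 1 \<le> i \<and> i \<le> m \<and> E2 (i-1) (m+1)}"
      using lab[of m "m+1"] by simp
    also have "\<dots> = {i. 1 \<le> i \<and> i \<le> m \<and> i \<in> B}" unfolding E2_def by auto
    also have "\<dots> = B" using Bm by auto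
    finally show ?thesis .
  qed
  have nth\<sigma>: "\<sigma> ! j = j" if "j < m+2" for j
  proof -
    have h: "0 + j < m+2" using that by simp
    show ?thesis unfolding \<sigma>_def nth_upt[OF h] by simp
  qed
  have el: "\<forall>j<card V. \<sigma> ! j \<in> tbls_eligible V E precS' (take j \<sigma>)"
  proof (intro allI impI)
    fix j assume j: "j < card V"
    then have j2: "j < m+2" using cV by simp
    have mem: "j \<in> V - set (take j \<sigma>)" using j2 tk[of j] unfolding V_def by simp
    consider "j < m" | "j = m" | "j = m+1" using j2 by linarith
    then have "\<forall>y\<in>V - set (take j \<sigma>). \<not> precS' (tbls_label E (take j \<sigma>) j) (tbls_label E (take j \<sigma>) y)"
    proof cases
      case 1
      show ?thesis
      proof
        fix y assume "y \<in> V - set (take j \<sigma>)"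
        have "length (take j \<sigma>) = j" using tk[of j] j2 by simp
        then have "tbls_label E (take j \<sigma>) y \<subseteq> {1..j}"
          using label_sub[of E "take j \<sigma>" y] by simp
        then have "tbls_label E (take j \<sigma>) y \<in> Pow {1..j}" by simp
        then have "\<not> precS' (M j) (tbls_label E (take j \<sigma>) y)" by (rule bspec[OF M(2)])
        then show "\<not> precS' (tbls_label E (take j \<sigma>) j) (tbls_label E (take j \<sigma>) y)"
          unfolding labj[OF 1] .
      qed
    next
      case 2
      have VS: "V - set (take j \<sigma>) = {m, m+1}" using 2 tk[of m] unfolding V_def by auto
      have "\<not> precS' A A" by (rule bspec[OF irr' AB(1)])
      then show ?thesis unfolding VS using 2 labA labB AB(4) by simp
    next
      case 3
      have "V - set (take j \<sigma>) = {m+1}" using 3 tk[of "m+1"] unfolding V_def by auto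
      have "\<not> precS' (tbls_label E (take j \<sigma>) (m+1)) (tbls_label E (take j \<sigma>) (m+1))"
        by (rule bspec[OF irr' label_PF])
      then show ?thesis using 3 \<open>V - set (take j \<sigma>) = {m+1}\<close> by simp
    qed
    then show "\<sigma> ! j \<in> tbls_eligible V E precS' (take j \<sigma>)"
      using mem unfolding tbls_eligible_def nth\<sigma>[OF j2] by blast
  qed
  have "TBLS V E precS' \<sigma> = \<sigma>" using conv[OF ordS el] .
  then have "is_search_ordering V E precS' \<sigma>" unfolding is_search_ordering_def using ordS by (intro exI[of _ \<sigma>]) simp
  then have "is_search_ordering V E precS \<sigma>" using I fg by blast
  then obtain \<tau> where \<tau>: "is_ordering V \<tau>" "\<sigma> = TBLS V E precS \<tau>"
    unfolding is_search_ordering_def by blast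
  have fV: "finite V" unfolding V_def by simp
  have "\<sigma> ! m \<in> tbls_eligible V E precS (take m \<sigma>)"
    using run2[OF spo fV \<tau>(1) \<tau>(2)] cV by simp
  moreover have "m+1 \<in> V - set (take m \<sigma>)" using tk[of m] unfolding V_def by simp
  ultimately show False using nth\<sigma>[of m] labA labB AB(3) unfolding tbls_eligible_def by auto
qed

declare upt_Suc[simp]

theorem theorem1:
  fixes precS precS' :: "nat set \<Rightarrow> nat set \<Rightarrow> bool"
  assumes "strict_po_on_PF precS" and "strict_po_on_PF precS'"
  shows "(\<forall>(V :: nat set) E \<sigma>. fin_graph V E \<longrightarrow>
            is_search_ordering V E precS' \<sigma> \<longrightarrow> is_search_ordering V E precS \<sigma>)
         \<longleftrightarrow> (\<forall>A\<in>PF. \<forall>B\<in>PF. precS A B \<longrightarrow> precS' A B)"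
proof
  assume I: "\<forall>(V :: nat set) E \<sigma>. fin_graph V E \<longrightarrow>
            is_search_ordering V E precS' \<sigma> \<longrightarrow> is_search_ordering V E precS \<sigma>"
  show "\<forall>A\<in>PF. \<forall>B\<in>PF. precS A B \<longrightarrow> precS' A B"
  proof (intro ballI impI)
    fix A B assume a: "A \<in> PF" "B \<in> PF" "precS A B"
    show "precS' A B"
    proof (rule ccontr)
      assume "\<not> precS' A B"
      from construct[OF assms a this I] show False .
    qed
  qed
next
  assume H: "\<forall>A\<in>PF. \<forall>B\<in>PF. precS A B \<longrightarrow> precS' A B"
  show "\<forall>(V :: nat set) E \<sigma>. fin_graph V E \<longrightarrow>
            is_search_ordering V E precS' \<sigma> \<longrightarrow> is_search_ordering V E precS \<sigma>"
  proof (intro allI impI)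
    fix V :: "nat set" and E \<sigma>
    assume fg: "fin_graph V E" and so: "is_search_ordering V E precS' \<sigma>"
    from so obtain \<tau> where \<tau>: "is_ordering V \<tau>" "\<sigma> = TBLS V E precS' \<tau>"
      unfolding is_search_ordering_def by (elim exE conjE)
    have fV: "finite V" using fg unfolding fin_graph_def by (rule conjunct1)
    note R0 = run2[OF assms(2) fV \<tau>(1) \<tau>(2)]
    have R1: "is_ordering V \<sigma>" using R0 by (rule conjunct1)
    have R2: "\<forall>j<card V. \<sigma> ! j \<in> tbls_eligible V E precS' (take j \<sigma>)" using R0 by (rule conjunct2)
    have sub: "x \<in> tbls_eligible V E precS p" if x: "x \<in> tbls_eligible V E precS' p" for x p
    proof -
      have xm: "x \<in> V - set p" and nx: "\<not> (\<exists>y\<in>V - set p. precS' (tbls_label E p x) (tbls_label E p y))"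
        using x unfolding tbls_eligible_def by simp_all
      have "\<not> precS (tbls_label E p x) (tbls_label E p y)" if "y \<in> V - set p" for y
      proof
        assume "precS (tbls_label E p x) (tbls_label E p y)"
        then have "precS' (tbls_label E p x) (tbls_label E p y)"
          using bspec[OF bspec[OF H label_PF] label_PF] by (rule mp[rotated])
        then show False using nx that by blast
      qed
      then show ?thesis using xm unfolding tbls_eligible_def by blast
    qed
    have "\<forall>j<card V. \<sigma> ! j \<in> tbls_eligible V E precS (take j \<sigma>)"
    proof (intro allI impI)
      fix j assume "j < card V"
      then have "\<sigma> ! j \<in> tbls_eligible V E precS' (take j \<sigma>)" using R2 by simp
      then show "\<sigma> ! j \<in> tbls_eligible V E precS (take j \<sigma>)" by (rule sub)
    qed
    then have "TBLS V E precS \<sigma> = \<sigma>" using conv[OF R1] by simp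
    then show "is_search_ordering V E precS \<sigma>"
      unfolding is_search_ordering_def using R1 by (intro exI[of _ \<sigma>]) simp
  qed
qed

end
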